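(* Let $R$ be an $\mathbb{N}$-graded domain and let $F_1,\ldots,F_n$ be a regular sequence of homogeneous elements of $R$ that generate a prime ideal $P$. Let $f_1,\ldots,f_n \in R$ be elements whose leading forms are $F_1,\ldots,F_n$ respectively. Then $f_1,\ldots,f_n$ generate a prime ideal of $R$.
   Context: The leading form of a nonzero element of an $\mathbb{N}$-graded ring is its nonzero homogeneous component of highest degree. *)

theory Defs
  imports Main
begin

definition graded_decomp :: "(nat \<Rightarrow> 'a::comm_ring_1 set) \<Rightarrow> 'a \<Rightarrow> (nat \<Rightarrow> 'a) \<Rightarrow> bool" where
  "graded_decomp G x c \<longleftrightarrow> finite {d. c d \<noteq> 0} \<and> (\<forall>d. c d \<in> G d) \<and> x = (\<Sum>d\<in>{d. c d \<noteq> 0}. c d)"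

definition graded_ring :: "(nat \<Rightarrow> 'a::comm_ring_1 set) \<Rightarrow> bool" where
  "graded_ring G \<longleftrightarrow>
     (\<forall>d. 0 \<in> G d \<and> (\<forall>x\<in>G d. \<forall>y\<in>G d. x + y \<in> G d \<and> - x \<in> G d)) \<and>
     (\<forall>d e. \<forall>x\<in>G d. \<forall>y\<in>G e. x * y \<in> G (d + e)) \<and>
     (\<forall>x. \<exists>!c. graded_decomp G x c)"

definition homogeneous :: "(nat \<Rightarrow> 'a::comm_ring_1 set) \<Rightarrow> 'a \<Rightarrow> bool" where
  "homogeneous G x \<longleftrightarrow> (\<exists>d. x \<in> G d)"

definition component :: "(nat \<Rightarrow> 'a::comm_ring_1 set) \<Rightarrow> nat \<Rightarrow> 'a \<Rightarrow> 'a" where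
  "component G d x = (THE c. graded_decomp G x c) d"

definition leading_form :: "(nat \<Rightarrow> 'a::comm_ring_1 set) \<Rightarrow> 'a \<Rightarrow> 'a" where
  "leading_form G x = component G (Max {d. component G d x \<noteq> 0}) x"

definition gen_ideal :: "(nat \<Rightarrow> 'a::comm_ring_1) \<Rightarrow> nat \<Rightarrow> 'a set" where
  "gen_ideal F k = {\<Sum>j<k. r j * F j | r. True}"

definition prime_ideal :: "'a::comm_ring_1 set \<Rightarrow> bool" where
  "prime_ideal P \<longleftrightarrow> 0 \<in> P \<and> (\<forall>x\<in>P. \<forall>y\<in>P. x + y \<in> P) \<and> (\<forall>r. \<forall>x\<in>P. r * x \<in> P)
     \<and> P \<noteq> UNIV \<and> (\<forall>a b. a * b \<in> P \<longrightarrow> a \<in> P \<or> b \<in> P)"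

definition regular_sequence :: "(nat \<Rightarrow> 'a::comm_ring_1) \<Rightarrow> nat \<Rightarrow> bool" where
  "regular_sequence F n \<longleftrightarrow>
     (\<forall>i<n. \<forall>x. x * F i \<in> gen_ideal F i \<longrightarrow> x \<in> gen_ideal F i) \<and> gen_ideal F n \<noteq> UNIV"

end

theory Submission
  imports Defs
begin


definition deg :: "(nat \<Rightarrow> 'a::comm_ring_1 set) \<Rightarrow> 'a \<Rightarrow> nat" where
  "deg G x = Max {d. component G d x \<noteq> 0}"

lemma lf_def': "leading_form G x = component G (deg G x) x"
  by (simp add: leading_form_def deg_def)

context
  fixes G :: "nat \<Rightarrow> 'a::comm_ring_1 set"
  assumes gr: "graded_ring G"
begin

lemma G0: "0 \<in> G d" using gr by (simp add: graded_ring_def)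
lemma Gadd: "x \<in> G d \<Longrightarrow> y \<in> G d \<Longrightarrow> x + y \<in> G d" using gr by (simp add: graded_ring_def)
lemma Gneg: "x \<in> G d \<Longrightarrow> - x \<in> G d" using gr by (simp add: graded_ring_def)
lemma Gmul: "x \<in> G d \<Longrightarrow> y \<in> G e \<Longrightarrow> x * y \<in> G (d + e)" using gr by (simp add: graded_ring_def)

lemma decomp_ex: "graded_decomp G x (\<lambda>d. component G d x)"
proof -
  have "\<exists>!c. graded_decomp G x c" using gr by (simp add: graded_ring_def)
  then have "graded_decomp G x (THE c. graded_decomp G x c)" by (rule theI')
  then show ?thesis by (simp add: component_def)
qed

lemma comp_unique: "graded_decomp G x c \<Longrightarrow> component G d x = c d"
proof -
  assume a: "graded_decomp G x c"
  have "\<exists>!c. graded_decomp G x c" using gr by (simp add: graded_ring_def)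
  then have "(THE c. graded_decomp G x c) = c" using the1_equality a by metis
  then show ?thesis by (simp add: component_def)
qed

lemma decompI:
  assumes "finite S" "\<And>d. d \<notin> S \<Longrightarrow> c d = 0" "\<And>d. c d \<in> G d" "x = sum c S"
  shows "graded_decomp G x c"
proof -
  have sub: "{d. c d \<noteq> 0} \<subseteq> S" using assms(2) by blast
  have "sum c S = sum c {d. c d \<noteq> 0}"
    by (rule sum.mono_neutral_right[OF assms(1) sub]) auto
  then show ?thesis unfolding graded_decomp_def
    using assms finite_subset[OF sub] by auto
qed

lemma comp_in: "component G d x \<in> G d"
  using decomp_ex[of x] by (simp add: graded_decomp_def)

lemma supp_finite: "finite {d. component G d x \<noteq> 0}"
  using decomp_ex[of x] by (simp add: graded_decomp_def)

lemma sum_comp: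
  assumes "finite S" "{d. component G d x \<noteq> 0} \<subseteq> S"
  shows "x = (\<Sum>d\<in>S. component G d x)"
proof -
  have "x = (\<Sum>d\<in>{d. component G d x \<noteq> 0}. component G d x)"
    using decomp_ex[of x] by (simp add: graded_decomp_def)
  also have "\<dots> = (\<Sum>d\<in>S. component G d x)"
    by (rule sum.mono_neutral_left[OF assms(1) assms(2)]) auto
  finally show ?thesis .
qed

lemma comp_hom: "y \<in> G e \<Longrightarrow> component G d y = (if d = e then y else 0)"
  apply (rule comp_unique)
  apply (rule decompI[where S="{e}"])
  using G0 by auto

lemma comp_zero[simp]: "component G d 0 = 0"
  using comp_hom[OF G0[of 0], of d] by simp

lemma comp_add: "component G d (x + y) = component G d x + component G d y"
proof -
  let ?S = "{d. component G d x \<noteq> 0} \<union> {d. component G d y \<noteq> 0}"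
  have f: "finite ?S" using supp_finite by auto
  show ?thesis
    apply (rule comp_unique)
    apply (rule decompI[where S="?S"])
    using f apply simp
      apply auto[1]
    using Gadd comp_in apply blast
    using sum_comp[OF f, of x] sum_comp[OF f, of y] by (simp add: sum.distrib)
qed

lemma comp_neg: "component G d (- x) = - component G d x"
proof -
  let ?S = "{d. component G d x \<noteq> 0}"
  show ?thesis
    apply (rule comp_unique)
    apply (rule decompI[where S="?S"])
    using supp_finite apply simp
      apply auto[1]
    using Gneg comp_in apply blast
    using sum_comp[OF supp_finite, of x] by (simp add: sum_negf)
qed

lemma comp_diff: "component G d (x - y) = component G d x - component G d y"
  using comp_add[of d x "-y"] comp_neg[of d y] by simp

lemma comp_sum: "finite I \<Longrightarrow> component G d (\<Sum>i\<in>I. h i) = (\<Sum>i\<in>I. component G d (h i))"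
  by (induction I rule: finite_induct) (auto simp: comp_add)

lemma comp_mult_hom:
  assumes y: "y \<in> G e"
  shows "component G m (x * y) = (if e \<le> m then component G (m - e) x * y else 0)"
proof -
  let ?c = "\<lambda>m. if e \<le> m then component G (m - e) x * y else 0"
  let ?T = "{d. component G d x \<noteq> 0}"
  let ?S = "(\<lambda>d. e + d) ` ?T"
  have f: "finite ?S" using supp_finite by auto
  have "graded_decomp G (x * y) ?c"
  proof (rule decompI[where S="?S"])
    show "finite ?S" by (rule f)
    show "?c d = 0" if "d \<notin> ?S" for d
    proof (cases "e \<le> d")
      case True
      then have "d = e + (d - e)" by simp
      then have "component G (d - e) x = 0" using that by (metis (mono_tags, lifting) image_eqI mem_Collect_eq)
      then show ?thesis by simp
    qed simp
    show "?c d \<in> G d" for d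
    proof (cases "e \<le> d")
      case True
      then show ?thesis using Gmul[OF comp_in y, of "d - e" x] by simp
    qed (simp add: G0)
    have "(\<Sum>d\<in>?S. ?c d) = (\<Sum>d\<in>?T. ?c (e + d))"
      by (rule sum.reindex_cong[where l="\<lambda>d. e + d"]) auto
    also have "\<dots> = (\<Sum>d\<in>?T. component G d x * y)" by simp
    also have "\<dots> = (\<Sum>d\<in>?T. component G d x) * y"
      by (simp add: sum_distrib_right)
    also have "\<dots> = x * y" using sum_comp[OF supp_finite subset_refl, of x] by simp
    finally show "x * y = sum ?c ?S" by simp
  qed
  then show ?thesis by (rule comp_unique)
qed

lemma comp_above: "deg G x < m \<Longrightarrow> component G m x = 0"
  unfolding deg_def using Max_ge[OF supp_finite] by force

lemma nz_supp: "x \<noteq> 0 \<Longrightarrow> {d. component G d x \<noteq> 0} \<noteq> {}"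
  using sum_comp[of "{}" x] by auto

lemma comp_deg_nz: "x \<noteq> 0 \<Longrightarrow> component G (deg G x) x \<noteq> 0"
  unfolding deg_def using Max_in[OF supp_finite nz_supp] by blast

lemma lf_nz: "x \<noteq> 0 \<Longrightarrow> leading_form G x \<noteq> 0"
  by (simp add: lf_def' comp_deg_nz)

lemma deg_eqI: "component G D x \<noteq> 0 \<Longrightarrow> (\<And>m. D < m \<Longrightarrow> component G m x = 0) \<Longrightarrow> deg G x = D"
  unfolding deg_def
  by (metis (mono_tags, lifting) Max_ge Max_in empty_iff linorder_neqE_nat mem_Collect_eq not_le supp_finite)

lemma deg_lt: "y \<noteq> 0 \<Longrightarrow> (\<And>m. D \<le> m \<Longrightarrow> component G m y = 0) \<Longrightarrow> deg G y < D"
  using comp_deg_nz not_le by blast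

lemma lf_in: "leading_form G x \<in> G (deg G x)"
  by (simp add: lf_def' comp_in)

lemma comp_conv: "component G m (x * y) = (\<Sum>e\<in>{..m}. component G (m - e) x * component G e y)"
proof -
  let ?N = "max m (deg G y)"
  have sub: "{d. component G d y \<noteq> 0} \<subseteq> {..?N}"
    using comp_above[of y] by (force simp: not_less)
  have "x * y = x * (\<Sum>e\<in>{..?N}. component G e y)"
    using sum_comp[OF _ sub] by simp
  also have "\<dots> = (\<Sum>e\<in>{..?N}. x * component G e y)" by (simp add: sum_distrib_left)
  finally have "component G m (x * y) = (\<Sum>e\<in>{..?N}. component G m (x * component G e y))"
    by (simp add: comp_sum)
  also have "\<dots> = (\<Sum>e\<in>{..?N}. if e \<le> m then component G (m - e) x * component G e y else 0)"
    by (simp add: comp_mult_hom[OF comp_in])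
  also have "\<dots> = (\<Sum>e\<in>{..?N} \<inter> {e. e \<le> m}. component G (m - e) x * component G e y)"
    by (simp add: sum.inter_restrict)
  also have "{..?N} \<inter> {e. e \<le> m} = {..m}" by auto
  finally show ?thesis .
qed

end


context
  fixes G :: "nat \<Rightarrow> 'a::idom set"
  assumes gr: "graded_ring G"
begin

lemma mult_comp:
  shows "component G (deg G x + deg G y) (x * y) = leading_form G x * leading_form G y"
    and "deg G x + deg G y < m \<Longrightarrow> component G m (x * y) = 0"
proof -
  let ?dx = "deg G x" and ?dy = "deg G y"
  let ?t = "\<lambda>m e. component G (m - e) x * component G e y"
  have z: "?t m e = 0" if "e \<noteq> ?dy" "e \<le> m" "m = ?dx + ?dy" for m e
  proof (cases "e < ?dy")
    case True
    then have "?dx < m - e" using that by linarith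
    then show ?thesis using comp_above[OF gr] by simp
  next
    case False
    then have "?dy < e" using that by linarith
    then show ?thesis using comp_above[OF gr, of y] by simp
  qed
  let ?m = "?dx + ?dy"
  have "component G ?m (x * y) = (\<Sum>e\<in>{..?m}. ?t ?m e)" by (rule comp_conv[OF gr])
  also have "\<dots> = ?t ?m ?dy + (\<Sum>e\<in>{..?m} - {?dy}. ?t ?m e)"
    by (rule sum.remove) auto
  also have "(\<Sum>e\<in>{..?m} - {?dy}. ?t ?m e) = 0"
    by (rule sum.neutral) (use z in auto)
  finally show "component G ?m (x * y) = leading_form G x * leading_form G y"
    by (simp add: lf_def')
  show "component G m (x * y) = 0" if "?m < m"
  proof -
    have "?t m e = 0" for e
    proof (cases "e \<le> ?dy")
      case True
      then have "?dx < m - e" using that by linarith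
      then show ?thesis using comp_above[OF gr] by simp
    next
      case False
      then show ?thesis using comp_above[OF gr, of y] by simp
    qed
    then show ?thesis using comp_conv[OF gr, of m x y] by (simp add: sum.neutral)
  qed
qed

lemma mult_lead:
  assumes "x \<noteq> 0" "y \<noteq> 0"
  shows "deg G (x * y) = deg G x + deg G y"
    and "leading_form G (x * y) = leading_form G x * leading_form G y"
proof -
  have nz: "leading_form G x * leading_form G y \<noteq> 0"
    using lf_nz[OF gr] assms by simp
  show d: "deg G (x * y) = deg G x + deg G y"
  proof (rule deg_eqI[OF gr])
    show "component G (deg G x + deg G y) (x * y) \<noteq> 0" using mult_comp(1) nz by simp
    show "component G m (x * y) = 0" if "deg G x + deg G y < m" for m
      using mult_comp(2) that by blast
  qed
  show "leading_form G (x * y) = leading_form G x * leading_form G y"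
    using d mult_comp by (simp add: lf_def')
qed

end

lemma gi_I: "x = (\<Sum>j<k. r j * F j) \<Longrightarrow> x \<in> gen_ideal F k"
  unfolding gen_ideal_def by (intro CollectI exI[of _ r]) simp

lemma gi_0: "0 \<in> gen_ideal F k"
  unfolding gen_ideal_def by (rule CollectI, rule exI[of _ "\<lambda>_. 0"]) simp

lemma gi_add: "x \<in> gen_ideal F k \<Longrightarrow> y \<in> gen_ideal F k \<Longrightarrow> x + y \<in> gen_ideal F k"
proof -
  assume "x \<in> gen_ideal F k" "y \<in> gen_ideal F k"
  then obtain r r' where "x = (\<Sum>j<k. r j * F j)" "y = (\<Sum>j<k. r' j * F j)"
    unfolding gen_ideal_def by auto
  then have "x + y = (\<Sum>j<k. (r j + r' j) * F j)" by (simp add: sum.distrib distrib_right)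
  then show ?thesis by (rule gi_I)
qed

lemma gi_mult: "x \<in> gen_ideal F k \<Longrightarrow> c * x \<in> gen_ideal F k"
proof -
  assume "x \<in> gen_ideal F k"
  then obtain r where "x = (\<Sum>j<k. r j * F j)"
    unfolding gen_ideal_def by auto
  then have "c * x = (\<Sum>j<k. (c * r j) * F j)" by (simp add: sum_distrib_left mult.assoc)
  then show ?thesis by (rule gi_I)
qed

lemma gi_neg: "x \<in> gen_ideal F k \<Longrightarrow> - x \<in> gen_ideal F k"
proof -
  assume "x \<in> gen_ideal F k"
  from gi_mult[OF this, of "-1"] show ?thesis by simp
qed

lemma gi_diff: "x \<in> gen_ideal F k \<Longrightarrow> y \<in> gen_ideal F k \<Longrightarrow> x - y \<in> gen_ideal F k"
proof -
  assume "x \<in> gen_ideal F k" "y \<in> gen_ideal F k"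
  then have "x + - y \<in> gen_ideal F k" by (intro gi_add gi_neg)
  then show ?thesis by simp
qed

lemma gi_gen: "j < k \<Longrightarrow> F j \<in> gen_ideal F k"
proof -
  assume j: "j < k"
  have "(\<Sum>i<k. (if i = j then 1 else 0) * F i) = (\<Sum>i<k. if i = j then F i else 0)"
    by (rule sum.cong) auto
  also have "\<dots> = F j" using j by (simp add: sum.delta)
  finally show ?thesis by (rule gi_I[OF sym])
qed

lemma gi_mono: "k \<le> l \<Longrightarrow> x \<in> gen_ideal F k \<Longrightarrow> x \<in> gen_ideal F l"
proof -
  assume kl: "k \<le> l" and "x \<in> gen_ideal F k"
  then obtain r where x: "x = (\<Sum>j<k. r j * F j)" unfolding gen_ideal_def by auto
  have "(\<Sum>j<l. (if j < k then r j else 0) * F j) = (\<Sum>j<l. if j \<in> {j. j < k} then r j * F j else 0)"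
    by (rule sum.cong) auto
  also have "\<dots> = (\<Sum>j\<in>{..<l} \<inter> {j. j < k}. r j * F j)"
    by (rule sum.inter_restrict[symmetric]) simp
  also have "{..<l} \<inter> {j. j < k} = {..<k}" using kl by auto
  finally have "x = (\<Sum>j<l. (if j < k then r j else 0) * F j)" using x by simp
  then show ?thesis by (rule gi_I)
qed

lemma gi_Suc: "x \<in> gen_ideal F (Suc k) \<Longrightarrow> \<exists>a b. b \<in> gen_ideal F k \<and> x = a * F k + b"
proof -
  assume "x \<in> gen_ideal F (Suc k)"
  then obtain r where "x = (\<Sum>j<Suc k. r j * F j)" unfolding gen_ideal_def by auto
  then have "x = r k * F k + (\<Sum>j<k. r j * F j)" by simp
  moreover have "(\<Sum>j<k. r j * F j) \<in> gen_ideal F k" by (rule gi_I) simp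
  ultimately show ?thesis by blast
qed

lemma gi_SucI: "b \<in> gen_ideal F k \<Longrightarrow> a * F k + b \<in> gen_ideal F (Suc k)"
proof -
  assume b: "b \<in> gen_ideal F k"
  have "a * F k \<in> gen_ideal F (Suc k)" by (rule gi_mult, rule gi_gen) simp
  moreover have "b \<in> gen_ideal F (Suc k)" by (rule gi_mono[OF _ b]) simp
  ultimately show ?thesis by (rule gi_add)
qed

lemma gi_zero: "gen_ideal F 0 = {0}"
  unfolding gen_ideal_def by simp

lemma gi_sum: "finite I \<Longrightarrow> (\<And>i. i \<in> I \<Longrightarrow> h i \<in> gen_ideal F k) \<Longrightarrow> (\<Sum>i\<in>I. h i) \<in> gen_ideal F k"
  by (induction I rule: finite_induct) (simp_all add: gi_0 gi_add)



context
  fixes G :: "nat \<Rightarrow> 'a::idom set" and F f :: "nat \<Rightarrow> 'a" and n :: nat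
  assumes gr: "graded_ring G"
    and hF: "\<forall>i<n. f i \<noteq> 0 \<and> leading_form G (f i) = F i"
begin

lemma lf_hom: "h \<in> G d \<Longrightarrow> h \<noteq> 0 \<Longrightarrow> deg G h = d \<and> leading_form G h = h"
proof -
  assume h: "h \<in> G d" "h \<noteq> 0"
  have "deg G h = d"
    by (rule deg_eqI[OF gr]) (simp_all add: comp_hom[OF gr h(1)] h(2))
  then show ?thesis by (simp add: lf_def' comp_hom[OF gr h(1)])
qed

lemma kill:
  assumes kn: "k \<le> n" and a: "a \<noteq> 0" and la: "leading_form G a \<in> gen_ideal F k"
  shows "\<exists>s\<in>gen_ideal f k. \<forall>m\<ge>deg G a. component G m (a - s) = 0"
proof -
  obtain c where c: "leading_form G a = (\<Sum>j<k. c j * F j)"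
    using la unfolding gen_ideal_def by auto
  define D where "D = deg G a"
  define e where "e j = deg G (f j)" for j
  define c' where "c' j = (if e j \<le> D then component G (D - e j) (c j) else 0)" for j
  define s where "s = (\<Sum>j<k. c' j * f j)"
  have sI: "s \<in> gen_ideal f k" unfolding s_def by (rule gi_I) simp
  have fF: "j < k \<Longrightarrow> component G (e j) (f j) = F j" for j
    using hF kn by (simp add: e_def lf_def')
  have FG: "j < k \<Longrightarrow> F j \<in> G (e j)" for j
    using fF comp_in[OF gr] by metis
  have c'G: "c' j \<in> G (D - e j)" for j
    by (simp add: c'_def comp_in[OF gr] G0[OF gr])
  have cm: "component G m (c' j * f j) = (if m = D then c' j * F j else 0)"
    if j: "j < k" and m: "D \<le> m" for j m
  proof (cases "e j \<le> D")
    case True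
    have "component G m (c' j * f j) = component G m (f j * c' j)" by (simp add: mult.commute)
    also have "\<dots> = component G (m - (D - e j)) (f j) * c' j"
    proof -
      have "D - e j \<le> m" using m by simp
      then show ?thesis using comp_mult_hom[OF gr c'G[of j], of m "f j"] by simp
    qed
    also have "\<dots> = (if m = D then c' j * F j else 0)"
    proof (cases "m = D")
      case True
      then have "m - (D - e j) = e j" using \<open>e j \<le> D\<close> by simp
      then show ?thesis using True fF[OF j] by (simp add: mult.commute)
    next
      case False
      then have "deg G (f j) < m - (D - e j)" using m \<open>e j \<le> D\<close> by (simp add: e_def)
      then show ?thesis using False comp_above[OF gr] by simp
    qed
    finally show ?thesis .
  next
    case False
    then show ?thesis by (simp add: c'_def comp_zero[OF gr])
  qed
  have lfsum: "leading_form G a = (\<Sum>j<k. c' j * F j)"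
  proof -
    have "leading_form G a = component G D (leading_form G a)"
      using comp_hom[OF gr lf_in[OF gr, of a]] by (simp add: D_def)
    also have "\<dots> = (\<Sum>j<k. component G D (c j * F j))"
      by (simp add: c comp_sum[OF gr])
    also have "\<dots> = (\<Sum>j<k. c' j * F j)"
    proof (rule sum.cong)
      fix j assume "j \<in> {..<k}"
      then show "component G D (c j * F j) = c' j * F j"
        using comp_mult_hom[OF gr FG, of j D "c j"] by (simp add: c'_def)
    qed simp
    finally show ?thesis .
  qed
  have "\<forall>m\<ge>D. component G m (a - s) = 0"
  proof (intro allI impI)
    fix m assume m: "D \<le> m"
    have "component G m (a - s) = component G m a - (\<Sum>j<k. component G m (c' j * f j))"
      by (simp add: s_def comp_diff[OF gr] comp_sum[OF gr])
    also have "\<dots> = component G m a - (if m = D then (\<Sum>j<k. c' j * F j) else 0)"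
      using cm m by simp
    also have "\<dots> = 0"
    proof (cases "m = D")
      case True
      then show ?thesis using lfsum by (simp add: lf_def' D_def)
    next
      case False
      then show ?thesis using m comp_above[OF gr, of a m] by (simp add: D_def)
    qed
    finally show "component G m (a - s) = 0" .
  qed
  then show ?thesis using sI D_def by blast
qed


lemma lfJ:
  assumes reg: "\<forall>i<n. \<forall>x. x * F i \<in> gen_ideal F i \<longrightarrow> x \<in> gen_ideal F i"
  shows "k \<le> n \<Longrightarrow> g \<in> gen_ideal f k \<Longrightarrow> g \<noteq> 0 \<Longrightarrow> leading_form G g \<in> gen_ideal F k"
proof (induction k arbitrary: g)
  case 0
  then show ?case by (simp add: gi_zero)
next
  case (Suc k)
  have kn: "k < n" using Suc.prems by simp
  have IH0: "\<And>g. g \<in> gen_ideal f k \<Longrightarrow> g \<noteq> 0 \<Longrightarrow> leading_form G g \<in> gen_ideal F k"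
    using Suc.IH kn by simp
  have IH: "leading_form G g \<in> gen_ideal F (Suc k)" if "g \<in> gen_ideal f k" "g \<noteq> 0" for g
    by (rule gi_mono[OF _ IH0[OF that]]) simp
  have fk: "f k \<noteq> 0" "leading_form G (f k) = F k" using hF kn by auto
  have P: "\<forall>a b. a \<noteq> 0 \<longrightarrow> deg G a < N \<longrightarrow> b \<in> gen_ideal f k \<longrightarrow> a * f k + b \<noteq> 0
      \<longrightarrow> leading_form G (a * f k + b) \<in> gen_ideal F (Suc k)" for N
  proof (induction N)
    case 0
    then show ?case by simp
  next
    case (Suc N)
    show ?case
    proof (intro allI impI)
      fix a b
      assume a: "a \<noteq> 0" and da: "deg G a < Suc N" and b: "b \<in> gen_ideal f k"
        and g: "a * f k + b \<noteq> 0"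
      define D where "D = deg G a + deg G (f k)"
      define A where "A = leading_form G a * F k"
      have afk: "a * f k \<noteq> 0" using a fk by simp
      have dafk: "deg G (a * f k) = D" using mult_lead[OF gr a fk(1)] by (simp add: D_def)
      have lafk: "leading_form G (a * f k) = A" using mult_lead[OF gr a fk(1)] fk by (simp add: A_def)
      have Anz: "A \<noteq> 0" using lf_nz[OF gr afk] lafk by simp
      have cD: "component G D (a * f k) = A" using lafk dafk by (simp add: lf_def')
      have cab: "\<And>m. D < m \<Longrightarrow> component G m (a * f k) = 0" using comp_above[OF gr] dafk by metis
      have cg: "\<And>m. component G m (a * f k + b) = component G m (a * f k) + component G m b"
        by (rule comp_add[OF gr])
      have AI: "A \<in> gen_ideal F (Suc k)" unfolding A_def by (intro gi_mult gi_gen) simp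
      show "leading_form G (a * f k + b) \<in> gen_ideal F (Suc k)"
      proof (cases "b = 0")
        case True
        then show ?thesis using lafk AI by simp
      next
        case bnz: False
        have cbd: "component G (deg G b) b = leading_form G b" by (simp add: lf_def')
        have cbab: "\<And>m. deg G b < m \<Longrightarrow> component G m b = 0" using comp_above[OF gr] by metis
        have lbI: "leading_form G b \<in> gen_ideal F k" using IH0[OF b bnz] .
        consider "D < deg G b" | "deg G b < D" | "deg G b = D" by linarith
        then show ?thesis
        proof cases
          case 1
          have "deg G (a * f k + b) = deg G b"
            by (rule deg_eqI[OF gr]) (use 1 cg cab cbab lf_nz[OF gr bnz] cbd in auto)
          then have "leading_form G (a * f k + b) = leading_form G b"
            using cg cab 1 cbd by (simp add: lf_def')
          then show ?thesis using lbI gi_mono[of k "Suc k"] by simp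
        next
          case 2
          have "deg G (a * f k + b) = D"
            by (rule deg_eqI[OF gr]) (use 2 cg cab cbab Anz cD in auto)
          then have "leading_form G (a * f k + b) = A"
            using cg cD cbab 2 by (simp add: lf_def')
          then show ?thesis using AI by simp
        next
          case 3
          show ?thesis
          proof (cases "A + leading_form G b = 0")
            case False
            have "deg G (a * f k + b) = D"
              by (rule deg_eqI[OF gr]) (use 3 False cg cab cbab cD cbd in auto)
            then have "leading_form G (a * f k + b) = A + leading_form G b"
              using cg cD cbd 3 by (simp add: lf_def')
            then show ?thesis using AI lbI gi_mono[of k "Suc k"] gi_add by fastforce
          next
            case True
            then have "leading_form G a * F k = - leading_form G b"
              by (simp add: A_def eq_neg_iff_add_eq_0)
            then have "leading_form G a * F k \<in> gen_ideal F k" using gi_neg[OF lbI] by simp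
            then have laI: "leading_form G a \<in> gen_ideal F k" using reg kn by blast
            obtain s where sI: "s \<in> gen_ideal f k"
              and sc: "\<forall>m\<ge>deg G a. component G m (a - s) = 0"
              using kill[OF _ a laI] kn by auto
            define a' where "a' = a - s"
            define b' where "b' = b + f k * s"
            have b'I: "b' \<in> gen_ideal f k" unfolding b'_def by (intro gi_add b gi_mult sI)
            have geq: "a * f k + b = a' * f k + b'"
              by (simp add: a'_def b'_def algebra_simps)
            show ?thesis
            proof (cases "a' = 0")
              case True
              then show ?thesis using geq IH[OF b'I] g by simp
            next
              case False
              have "deg G a' < deg G a"
                by (rule deg_lt[OF gr False]) (use sc a'_def in auto)
              then have "deg G a' < N" using da by simp
              then show ?thesis using Suc.IH False b'I geq g by metis
            qed
          qed
        qed
      qed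
    qed
  qed
  obtain a b where b: "b \<in> gen_ideal f k" and geq: "g = a * f k + b"
    using gi_Suc[OF Suc.prems(2)] by blast
  show ?case
  proof (cases "a = 0")
    case True
    then show ?thesis using IH b geq Suc.prems(3) by simp
  next
    case False
    then show ?thesis using P[of "Suc (deg G a)"] b geq Suc.prems(3) by blast
  qed
qed

end


theorem mainTheorem14:
  fixes G :: "nat \<Rightarrow> 'a::idom set"
    and F f :: "nat \<Rightarrow> 'a"
    and n :: nat
  assumes "graded_ring G"
    and "\<forall>i<n. homogeneous G (F i)"
    and "regular_sequence F n"
    and "prime_ideal (gen_ideal F n)"
    and "\<forall>i<n. f i \<noteq> 0 \<and> leading_form G (f i) = F i"
  shows "prime_ideal (gen_ideal f n)"
proof -
  note gr = assms(1)
  note hF = assms(5)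
  have reg: "\<forall>i<n. \<forall>x. x * F i \<in> gen_ideal F i \<longrightarrow> x \<in> gen_ideal F i"
    using assms(3) by (simp add: regular_sequence_def)
  have PnU: "gen_ideal F n \<noteq> UNIV" and Ppr: "\<And>a b. a * b \<in> gen_ideal F n \<Longrightarrow> a \<in> gen_ideal F n \<or> b \<in> gen_ideal F n"
    using assms(4) unfolding prime_ideal_def by blast+
  have lf: "leading_form G g \<in> gen_ideal F n" if "g \<in> gen_ideal f n" "g \<noteq> 0" for g
    using lfJ[OF gr hF reg order_refl that] .
  have notU: "gen_ideal f n \<noteq> UNIV"
  proof
    assume JU: "gen_ideal f n = UNIV"
    have "x \<in> gen_ideal F n" for x
    proof -
      have xs: "x = (\<Sum>d\<in>{d. component G d x \<noteq> 0}. component G d x)"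
        by (rule sum_comp[OF gr supp_finite[OF gr] subset_refl])
      have "(\<Sum>d\<in>{d. component G d x \<noteq> 0}. component G d x) \<in> gen_ideal F n"
      proof (rule gi_sum[OF supp_finite[OF gr]])
        fix d assume d: "d \<in> {d. component G d x \<noteq> 0}"
        then have nz: "component G d x \<noteq> 0" by simp
        have "leading_form G (component G d x) = component G d x"
          using lf_hom[OF gr hF comp_in[OF gr] nz] by simp
        then show "component G d x \<in> gen_ideal F n" using lf[of "component G d x"] JU nz by simp
      qed
      then show ?thesis using xs by simp
    qed
    then show False using PnU by blast
  qed
  have red: "\<forall>a. a \<notin> gen_ideal f n \<longrightarrow> deg G a < N \<longrightarrow>
     (\<exists>a'. a' - a \<in> gen_ideal f n \<and> a' \<noteq> 0 \<and> leading_form G a' \<notin> gen_ideal F n)" for N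
  proof (induction N)
    case 0
    then show ?case by simp
  next
    case (Suc N)
    show ?case
    proof (intro allI impI)
      fix a assume a: "a \<notin> gen_ideal f n" and da: "deg G a < Suc N"
      have anz: "a \<noteq> 0" using a gi_0 by metis
      show "\<exists>a'. a' - a \<in> gen_ideal f n \<and> a' \<noteq> 0 \<and> leading_form G a' \<notin> gen_ideal F n"
      proof (cases "leading_form G a \<in> gen_ideal F n")
        case False
        then show ?thesis using anz gi_0[of f n] by (intro exI[of _ a]) simp
      next
        case True
        obtain s where sI: "s \<in> gen_ideal f n"
          and sc: "\<forall>m\<ge>deg G a. component G m (a - s) = 0"
          using kill[OF gr hF order_refl anz True] by auto
        have a2: "a - s \<notin> gen_ideal f n"
        proof
          assume "a - s \<in> gen_ideal f n"
          then have "(a - s) + s \<in> gen_ideal f n" using sI by (rule gi_add)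
          then show False using a by simp
        qed
        have nz2: "a - s \<noteq> 0" using a2 gi_0 by metis
        have "deg G (a - s) < deg G a"
          by (rule deg_lt[OF gr nz2]) (use sc in auto)
        then have "deg G (a - s) < N" using da by simp
        then obtain a' where a': "a' - (a - s) \<in> gen_ideal f n" "a' \<noteq> 0"
          "leading_form G a' \<notin> gen_ideal F n"
          using Suc.IH a2 by blast
        have "a' - a = (a' - (a - s)) - s" by simp
        then have "a' - a \<in> gen_ideal f n" using gi_diff[OF a'(1) sI] by simp
        then show ?thesis using a' by blast
      qed
    qed
  qed
  have prime: "a \<in> gen_ideal f n \<or> b \<in> gen_ideal f n" if ab: "a * b \<in> gen_ideal f n" for a b
  proof (rule ccontr)
    assume "\<not> (a \<in> gen_ideal f n \<or> b \<in> gen_ideal f n)"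
    then have na: "a \<notin> gen_ideal f n" and nb: "b \<notin> gen_ideal f n" by auto
    obtain a' where a': "a' - a \<in> gen_ideal f n" "a' \<noteq> 0" "leading_form G a' \<notin> gen_ideal F n"
      using red[of "Suc (deg G a)"] na by auto
    obtain b' where b': "b' - b \<in> gen_ideal f n" "b' \<noteq> 0" "leading_form G b' \<notin> gen_ideal F n"
      using red[of "Suc (deg G b)"] nb by auto
    have eq: "a' * b' = a * b + (b' * (a' - a) + a * (b' - b))" by (simp add: algebra_simps)
    have "a' * b' \<in> gen_ideal f n"
      unfolding eq by (intro gi_add ab gi_mult a'(1) b'(1))
    moreover have "a' * b' \<noteq> 0" using a' b' by simp
    ultimately have "leading_form G (a' * b') \<in> gen_ideal F n" by (rule lf)
    then have "leading_form G a' * leading_form G b' \<in> gen_ideal F n"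
      using mult_lead[OF gr a'(2) b'(2)] by simp
    then show False using Ppr a'(3) b'(3) by blast
  qed
  show ?thesis unfolding prime_ideal_def
    using gi_0 gi_add gi_mult notU prime by blast
qed

end
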